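(* Let $(V,\mathcal H,\iota,W)$ be a generalized functional theory. The ensemble functional $\mathcal F_e$ is the lower convex envelope of both the Hohenberg–Kohn functional $\mathcal F_{HK}$ and the pure functional $\mathcal F_p$; that is, with all three functionals extended to $V^*$ by $+\infty$ outside their domains, $\mathcal F_{HK}^{**}=\mathcal F_p^{**}=\mathcal F_e$.
   Context: A generalized functional theory is a tuple $(V,\mathcal H,\iota,W)$ with $V$ a finite-dimensional real vector space, $\mathcal H$ a finite-dimensional complex Hilbert space, $\iota:V\to i\mathfrak u(\mathcal H)$ linear into the Hermitian operators, $W$ Hermitian. Density operators are regarded as elements of $(i\mathfrak u(\mathcal H))^*$ via the trace pairing; $\iota^*$ is the dual map. $\mathcal P$ = pure states, $\mathcal E$ = density operators, $\mathbf G_p(v)$ = pure ground states of $\iota(v)+W$. $\mathcal F_{HK}$ is defined on $\bigcup_v\iota^*(\mathbf G_p(v))$ by $\mathcal F_{HK}(\rho)=\mathrm{Tr}(\Gamma W)$ for any $v$ and $\Gamma\in\mathbf G_p(v)$ with $\iota^*(\Gamma)=\rho$ (independent of choices); $\mathcal F_p(\rho)=\min\{\mathrm{Tr}(\Gamma W):\Gamma\in\mathcal P,\iota^*(\Gamma)=\rho\}$ on $\iota^*(\mathcal P)$; $\mathcal F_e(\rho)=\min\{\mathrm{Tr}(\Gamma W):\Gamma\in\mathcal E,\iota^*(\Gamma)=\rho\}$ on $\iota^*(\mathcal E)$. For $g:V^*\to\mathbb R\cup\{+\infty\}$, $g^*(v)=\sup_\rho(\langle\rho,v\rangle-g(\rho))$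 is the convex conjugate and $g^{**}$ the biconjugate, i.e. the lower (closed) convex envelope of $g$. *)

theory Defs
  imports "HOL-Analysis.Analysis"
begin

text \<open>Finite-dimensional complex Hilbert space modelled as complex^'n (standard inner product);
operators on it as matrices complex^'n^'n. V is a real type of class euclidean_space;
V^* is the set of real-linear functionals on V.\<close>

definition hermitian :: "complex^'n^'n \<Rightarrow> bool" where
  "hermitian A \<longleftrightarrow> (\<forall>i j. A$i$j = cnj (A$j$i))"

definition cinner :: "complex^'n \<Rightarrow> complex^'n \<Rightarrow> complex" where
  "cinner x y = (\<Sum>i\<in>UNIV. cnj (x$i) * y$i)"

definition proj :: "complex^'n \<Rightarrow> complex^'n^'n" where
  "proj \<psi> = (\<chi> i j. \<psi>$i * cnj (\<psi>$j))"

definition pure_states :: "(complex^'n^'n) set" where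
  "pure_states = {proj \<psi> | \<psi>. cinner \<psi> \<psi> = 1}"

definition density_ops :: "(complex^'n^'n) set" where
  "density_ops = {\<Gamma>. hermitian \<Gamma> \<and> (\<forall>x. 0 \<le> Re (cinner x (\<Gamma> *v x))) \<and> trace \<Gamma> = 1}"

definition ground_states :: "complex^'n^'n \<Rightarrow> (complex^'n^'n) set" where
  "ground_states H = {proj \<psi> | \<psi>. cinner \<psi> \<psi> = 1 \<and>
      (\<exists>e::real. H *v \<psi> = complex_of_real e *s \<psi> \<and>
         (\<forall>(\<mu>::real) \<phi>. \<phi> \<noteq> 0 \<and> H *v \<phi> = complex_of_real \<mu> *s \<phi> \<longrightarrow> e \<le> \<mu>))}"

definition gen_functional_theory :: "('v::euclidean_space \<Rightarrow> complex^'n^'n) \<Rightarrow> complex^'n^'n \<Rightarrow> bool" where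
  "gen_functional_theory \<iota> W \<longleftrightarrow> linear \<iota> \<and> (\<forall>v. hermitian (\<iota> v)) \<and> hermitian W"

definition iota_star :: "('v \<Rightarrow> complex^'n^'n) \<Rightarrow> complex^'n^'n \<Rightarrow> ('v \<Rightarrow> real)" where
  "iota_star \<iota> \<Gamma> = (\<lambda>v. Re (trace (\<Gamma> ** \<iota> v)))"

definition energy :: "complex^'n^'n \<Rightarrow> complex^'n^'n \<Rightarrow> real" where
  "energy W \<Gamma> = Re (trace (\<Gamma> ** W))"

definition Gp :: "('v \<Rightarrow> complex^'n^'n) \<Rightarrow> complex^'n^'n \<Rightarrow> 'v \<Rightarrow> (complex^'n^'n) set" where
  "Gp \<iota> W v = ground_states (\<iota> v + W)"

text \<open>Functionals extended by +infinity outside their domains.\<close>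
definition F_HK :: "('v \<Rightarrow> complex^'n^'n) \<Rightarrow> complex^'n^'n \<Rightarrow> ('v \<Rightarrow> real) \<Rightarrow> ereal" where
  "F_HK \<iota> W \<rho> =
     (if \<exists>v \<Gamma>. \<Gamma> \<in> Gp \<iota> W v \<and> iota_star \<iota> \<Gamma> = \<rho>
      then ereal (energy W (snd (SOME (v, \<Gamma>). \<Gamma> \<in> Gp \<iota> W v \<and> iota_star \<iota> \<Gamma> = \<rho>)))
      else \<infinity>)"

definition F_p :: "('v \<Rightarrow> complex^'n^'n) \<Rightarrow> complex^'n^'n \<Rightarrow> ('v \<Rightarrow> real) \<Rightarrow> ereal" where
  "F_p \<iota> W \<rho> = Inf ((\<lambda>\<Gamma>. ereal (energy W \<Gamma>)) ` {\<Gamma> \<in> pure_states. iota_star \<iota> \<Gamma> = \<rho>})"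

definition F_e :: "('v \<Rightarrow> complex^'n^'n) \<Rightarrow> complex^'n^'n \<Rightarrow> ('v \<Rightarrow> real) \<Rightarrow> ereal" where
  "F_e \<iota> W \<rho> = Inf ((\<lambda>\<Gamma>. ereal (energy W \<Gamma>)) ` {\<Gamma> \<in> density_ops. iota_star \<iota> \<Gamma> = \<rho>})"

definition conj_fn :: "(('v::real_vector \<Rightarrow> real) \<Rightarrow> ereal) \<Rightarrow> 'v \<Rightarrow> ereal" where
  "conj_fn g v = (SUP \<rho>\<in>{\<rho>. linear \<rho>}. ereal (\<rho> v) - g \<rho>)"

definition biconj :: "(('v::real_vector \<Rightarrow> real) \<Rightarrow> ereal) \<Rightarrow> ('v \<Rightarrow> real) \<Rightarrow> ereal" where
  "biconj g \<rho> = (SUP v. ereal (\<rho> v) - conj_fn g v)"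

end

theory Submission
  imports Defs
begin


lemma cinner_add_right: "cinner x (y + z) = cinner x y + cinner x z"
  by (simp add: cinner_def sum.distrib algebra_simps)
lemma cinner_add_left: "cinner (x + y) z = cinner x z + cinner y z"
  by (simp add: cinner_def sum.distrib algebra_simps)
lemma cinner_diff_right: "cinner x (y - z) = cinner x y - cinner x z"
  by (simp add: cinner_def sum_subtractf algebra_simps)
lemma cinner_diff_left: "cinner (x - y) z = cinner x z - cinner y z"
  by (simp add: cinner_def sum_subtractf algebra_simps)
lemma cinner_scale_right: "cinner x (c *s y) = c * cinner x y"
  by (simp add: cinner_def sum_distrib_left algebra_simps)
lemma cinner_scale_left: "cinner (c *s x) y = cnj c * cinner x y"
  by (simp add: cinner_def sum_distrib_left algebra_simps)
lemma cinner_cnj: "cinner y x = cnj (cinner x y)"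
  by (simp add: cinner_def mult.commute)
lemma cinner_zero_right[simp]: "cinner x 0 = 0"
  by (simp add: cinner_def)
lemma cinner_zero_left[simp]: "cinner 0 x = 0"
  by (simp add: cinner_def)
lemma cinner_self_real: "cinner x x = complex_of_real (\<Sum>i\<in>UNIV. (cmod (x$i))^2)"
  unfolding cinner_def of_real_sum
  by (rule sum.cong) (simp, metis complex_norm_square mult.commute)
lemma Re_cinner_self: "Re (cinner x x) = (norm x)^2"
  by (simp add: cinner_self_real norm_vec_def L2_set_def sum_nonneg)
lemma Im_cinner_self: "Im (cinner x x) = 0"
  by (simp add: cinner_self_real)
lemma cinner_self_eq0: "cinner x x = 0 \<longleftrightarrow> x = 0"
proof
  assume "cinner x x = 0"
  then have "Re (cinner x x) = 0" by simp
  then show "x = 0" by (simp add: Re_cinner_self)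
qed simp

lemma mv_add: "(M :: complex^'n^'n) *v (x + y) = M *v x + M *v y"
  by (simp add: matrix_vector_right_distrib)
lemma mv_diff: "(M :: complex^'n^'n) *v (x - y) = M *v x - M *v y"
  by (simp add: vec_eq_iff matrix_vector_mult_def sum_subtractf algebra_simps)
lemma mv_scale: "(M :: complex^'n^'n) *v (c *s x) = c *s (M *v x)"
  by (simp add: vec_eq_iff matrix_vector_mult_def sum_distrib_left algebra_simps)
lemma mv_madd: "((M :: complex^'n^'n) + N) *v x = M *v x + N *v x"
  by (simp add: vec_eq_iff matrix_vector_mult_def sum.distrib algebra_simps)
lemma mv_mdiff: "((M :: complex^'n^'n) - N) *v x = M *v x - N *v x"
  by (simp add: vec_eq_iff matrix_vector_mult_def sum_subtractf algebra_simps)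
lemma mv_mscaleR: "((c::real) *\<^sub>R (M :: complex^'n^'n)) *v x = complex_of_real c *s (M *v x)"
  apply (simp add: vec_eq_iff matrix_vector_mult_def)
  apply (simp add: sum_distrib_left scaleR_conv_of_real algebra_simps)
  done
lemma mv_mneg: "(- (M :: complex^'n^'n)) *v x = - (M *v x)"
  by (simp add: vec_eq_iff matrix_vector_mult_def sum_negf)

lemma hermitian_cnj: "hermitian M \<Longrightarrow> cnj (M$i$j) = M$j$i"
  unfolding hermitian_def by (metis complex_cnj_cnj)

lemma hermitian_adj: "hermitian M \<Longrightarrow> cinner x (M *v y) = cinner (M *v x) y"
proof -
  assume h: "hermitian M"
  have "cinner x (M *v y) = (\<Sum>i\<in>UNIV. \<Sum>j\<in>UNIV. cnj (x$i) * M$i$j * y$j)"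
    by (simp add: cinner_def matrix_vector_mult_def sum_distrib_left mult.assoc)
  also have "\<dots> = (\<Sum>j\<in>UNIV. \<Sum>i\<in>UNIV. cnj (x$i) * M$i$j * y$j)"
    by (rule sum.swap)
  also have "\<dots> = cinner (M *v x) y"
    by (simp add: cinner_def matrix_vector_mult_def sum_distrib_right sum_distrib_left hermitian_cnj[OF h] mult.commute mult.left_commute)
  finally show ?thesis .
qed

lemma hermitian_quad_real: "hermitian M \<Longrightarrow> Im (cinner x (M *v x)) = 0"
proof -
  assume h: "hermitian M"
  have "cinner x (M *v x) = cnj (cinner x (M *v x))"
    using hermitian_adj[OF h, of x x] cinner_cnj[of x "M *v x"] by simp
  then show ?thesis by (metis cnj.simps(2) complex.sel(2) neg_equal_zero)
qed

lemma proj_mv: "proj \<psi> *v x = cinner \<psi> x *s \<psi>"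
  by (simp add: vec_eq_iff proj_def matrix_vector_mult_def cinner_def sum_distrib_left algebra_simps)

lemma trace_proj_mult: "trace (proj \<psi> ** A) = cinner \<psi> (A *v \<psi>)"
  unfolding trace_def proj_def matrix_matrix_mult_def cinner_def matrix_vector_mult_def
  apply (simp add: sum_distrib_left)
  apply (subst sum.swap)
  apply (simp add: algebra_simps)
  done

lemma trace_mscaleR: "trace (((c::real) *\<^sub>R (M :: complex^'n^'n)) ** A) = complex_of_real c * trace (M ** A)"
  apply (simp add: trace_def matrix_matrix_mult_def)
  apply (simp add: sum_distrib_left scaleR_conv_of_real algebra_simps)
  done

lemma trace_mdiff: "trace (((M :: complex^'n^'n) - N) ** A) = trace (M ** A) - trace (N ** A)"
  by (simp add: trace_def matrix_matrix_mult_def sum_subtractf algebra_simps)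

lemma trace_madd: "trace (((M :: complex^'n^'n) + N) ** A) = trace (M ** A) + trace (N ** A)"
  by (simp add: trace_def matrix_matrix_mult_def sum.distrib algebra_simps)

lemma trace_madd_r: "trace ((M :: complex^'n^'n) ** (A + B)) = trace (M ** A) + trace (M ** B)"
  by (simp add: matrix_add_ldistrib trace_add)

lemma trace_mdiff_r: "trace ((M :: complex^'n^'n) ** (A - B)) = trace (M ** A) - trace (M ** B)"
  by (simp add: trace_def matrix_matrix_mult_def sum_subtractf algebra_simps)

lemma trace_mscaleR_r: "trace ((M :: complex^'n^'n) ** ((c::real) *\<^sub>R A)) = complex_of_real c * trace (M ** A)"
  apply (simp add: trace_def matrix_matrix_mult_def)
  apply (simp add: sum_distrib_left scaleR_conv_of_real algebra_simps)
  done

lemma hermitianI: "(\<And>i j. cnj (M$j$i) = M$i$j) \<Longrightarrow> hermitian M"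
  unfolding hermitian_def by (metis complex_cnj_cnj)

lemma hermitian_diff: "hermitian A \<Longrightarrow> hermitian B \<Longrightarrow> hermitian (A - B)"
  by (rule hermitianI) (simp add: hermitian_cnj)
lemma hermitian_add: "hermitian A \<Longrightarrow> hermitian B \<Longrightarrow> hermitian (A + B)"
  by (rule hermitianI) (simp add: hermitian_cnj)
lemma hermitian_scaleR: "hermitian A \<Longrightarrow> hermitian ((c::real) *\<^sub>R A)"
  by (rule hermitianI) (simp add: hermitian_cnj)
lemma hermitian_neg: "hermitian A \<Longrightarrow> hermitian (- A)"
  by (rule hermitianI) (simp add: hermitian_cnj)
lemma hermitian_proj: "hermitian (proj \<psi>)"
  by (rule hermitianI) (simp add: proj_def)
lemma hermitian_mat: "hermitian (mat (complex_of_real c))"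
  by (rule hermitianI) (simp add: mat_def)



lemma quad_zero_lin:
  fixes a b :: real
  assumes "\<And>t. 0 \<le> 2 * t * b + t^2 * a"
  shows "b = 0"
proof (rule ccontr)
  assume b: "b \<noteq> 0"
  define t where "t = - b / (\<bar>a\<bar> + 1)"
  have pos: "\<bar>a\<bar> + 1 > 0" by simp
  have h0: "0 \<le> 2 * t * b + t^2 * a" by (rule assms)
  have h1: "t^2 * a \<le> t^2 * \<bar>a\<bar>" by (simp add: mult_left_mono)
  have h2: "t^2 * (\<bar>a\<bar> + 1) = t^2 * \<bar>a\<bar> + t^2" by (simp add: algebra_simps)
  have h3: "0 \<le> t^2" by simp
  have h4: "2 * t * b + t^2 * (\<bar>a\<bar> + 1) = - (b^2) / (\<bar>a\<bar> + 1)"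
  proof -
    have gen: "2 * (- b / d) * b + (- b / d)^2 * d = - (b^2) / d" if "d > 0" for d :: real
      using that by (simp add: power2_eq_square field_simps)
    show ?thesis unfolding t_def by (rule gen[OF pos])
  qed
  have h5: "- (b^2) / (\<bar>a\<bar> + 1) < 0" using b pos by simp
  show False using h0 h1 h2 h3 h4 h5 by linarith
qed

lemma cinner_real_scale_both:
  "cinner (complex_of_real c *s x) (H *v (complex_of_real c *s x)) = complex_of_real (c^2) * cinner x (H *v x)"
  by (simp add: mv_scale cinner_scale_left cinner_scale_right power2_eq_square)

lemma cinner_eq1_norm: "norm x = 1 \<Longrightarrow> cinner x x = 1"
  by (rule complex_eqI) (simp_all add: Re_cinner_self Im_cinner_self)

lemma rayleigh_min:
  fixes H :: "complex^'n^'n"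
  assumes h: "hermitian H"
  shows "\<exists>\<psi> e. cinner \<psi> \<psi> = 1 \<and> H *v \<psi> = complex_of_real e *s \<psi> \<and>
           (\<forall>x. e * Re (cinner x x) \<le> Re (cinner x (H *v x)))"
proof -
  define f where "f x = Re (cinner x (H *v x))" for x
  have cont: "continuous_on (sphere 0 1) f"
    unfolding f_def cinner_def matrix_vector_mult_def
    by (intro continuous_intros)
  have ne: "sphere (0::complex^'n) 1 \<noteq> {}" by simp
  obtain \<psi> where \<psi>S: "\<psi> \<in> sphere 0 1" and \<psi>min: "\<And>y. y \<in> sphere 0 1 \<Longrightarrow> f \<psi> \<le> f y"
    using continuous_attains_inf[OF compact_sphere ne cont] by blast
  define e where "e = f \<psi>"
  have n\<psi>: "norm \<psi> = 1" using \<psi>S by simp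
  have c\<psi>: "cinner \<psi> \<psi> = 1" by (rule cinner_eq1_norm[OF n\<psi>])
  have ineq: "e * Re (cinner x x) \<le> f x" for x
  proof (cases "x = 0")
    case True then show ?thesis by (simp add: f_def)
  next
    case False
    define c where "c = 1 / norm x"
    have nx: "norm x > 0" using False by simp
    have "norm (complex_of_real c *s x) = 1"
    proof -
      have "Re (cinner (complex_of_real c *s x) (complex_of_real c *s x)) = c^2 * (norm x)^2"
        by (simp add: cinner_scale_left cinner_scale_right Re_cinner_self power2_eq_square)
      also have "\<dots> = 1" using nx by (simp add: c_def field_simps)
      finally have "(norm (complex_of_real c *s x))^2 = 1" by (simp add: Re_cinner_self)
      then show ?thesis using norm_ge_zero[of "complex_of_real c *s x"] by (auto simp: power2_eq_1_iff)
    qed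
    then have "e \<le> f (complex_of_real c *s x)" unfolding e_def by (intro \<psi>min) simp
    also have "\<dots> = c^2 * f x" unfolding f_def by (simp add: cinner_real_scale_both)
    finally have "e \<le> c^2 * f x" .
    then have "e * (norm x)^2 \<le> c^2 * f x * (norm x)^2" by (simp add: mult_right_mono)
    also have "\<dots> = f x" using nx by (simp add: c_def field_simps)
    finally show ?thesis by (simp add: Re_cinner_self)
  qed
  define A where "A = H - e *\<^sub>R mat 1"
  have hA: "hermitian A" unfolding A_def by (intro hermitian_diff h hermitian_scaleR) (simp add: hermitianI mat_def)
  have Ax: "A *v x = H *v x - complex_of_real e *s x" for x
    unfolding A_def by (simp add: mv_mdiff mv_mscaleR)
  have gA: "Re (cinner x (A *v x)) = f x - e * Re (cinner x x)" for x
    by (simp add: Ax cinner_diff_right cinner_scale_right f_def)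
  have gpos: "0 \<le> Re (cinner x (A *v x))" for x using ineq[of x] gA[of x] by simp
  have g\<psi>: "Re (cinner \<psi> (A *v \<psi>)) = 0" using gA[of \<psi>] c\<psi> by (simp add: e_def)
  have expand: "Re (cinner (\<psi> + complex_of_real t *s \<phi>) (A *v (\<psi> + complex_of_real t *s \<phi>)))
      = Re (cinner \<psi> (A *v \<psi>)) + 2 * t * Re (cinner \<phi> (A *v \<psi>)) + t^2 * Re (cinner \<phi> (A *v \<phi>))" for t \<phi>
  proof -
    have r: "Re (cinner \<psi> (A *v \<phi>)) = Re (cinner \<phi> (A *v \<psi>))"
      using hermitian_adj[OF hA, of \<psi> \<phi>] cinner_cnj[of \<phi> "A *v \<psi>"] by simp
    show ?thesis
      by (simp add: mv_add mv_scale cinner_add_left cinner_add_right cinner_scale_left cinner_scale_right r power2_eq_square algebra_simps)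
  qed
  have lin0: "Re (cinner \<phi> (A *v \<psi>)) = 0" for \<phi>
  proof (rule quad_zero_lin)
    fix t :: real
    show "0 \<le> 2 * t * Re (cinner \<phi> (A *v \<psi>)) + t^2 * Re (cinner \<phi> (A *v \<phi>))"
      using gpos[of "\<psi> + complex_of_real t *s \<phi>"] expand[of t \<phi>] g\<psi> by simp
  qed
  have "Re (cinner (A *v \<psi>) (A *v \<psi>)) = 0" by (rule lin0)
  then have "(norm (A *v \<psi>))^2 = 0" by (simp add: Re_cinner_self)
  then have "A *v \<psi> = 0" by simp
  then have eig: "H *v \<psi> = complex_of_real e *s \<psi>" by (simp add: Ax)
  show ?thesis
    using c\<psi> eig ineq unfolding f_def by blast
qed



lemma scaleR_vec_s: "(c::real) *\<^sub>R (x::complex^'n) = complex_of_real c *s x"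
  by (simp add: vec_eq_iff) (simp add: scaleR_conv_of_real)

lemma mat_zero_if_mv: "(\<And>y. (M::complex^'n^'n) *v y = 0) \<Longrightarrow> M = 0"
proof -
  assume h: "\<And>y. M *v y = 0"
  show "M = 0"
  proof (simp add: vec_eq_iff, intro allI)
    fix i j
    have "(M *v axis j 1) $ i = M$i$j"
      by (simp add: matrix_vector_mult_def axis_def if_distrib cong: if_cong)
    then show "M$i$j = 0" using h by simp
  qed
qed

lemma herm_zero_form:
  assumes h: "hermitian G" and z: "\<And>x. Re (cinner x (G *v x)) = 0"
  shows "G = 0"
proof (rule mat_zero_if_mv)
  fix y
  have e: "cinner y (G *v (G *v y)) = cinner (G *v y) (G *v y)"
    by (rule hermitian_adj[OF h])
  have "Re (cinner (y + G *v y) (G *v (y + G *v y))) =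
        Re (cinner y (G *v y)) + Re (cinner y (G *v (G *v y))) + Re (cinner (G *v y) (G *v y))
        + Re (cinner (G *v y) (G *v (G *v y)))"
    by (simp add: mv_add cinner_add_left cinner_add_right)
  then have "0 = 2 * Re (cinner (G *v y) (G *v y))"
    using z[of "y + G *v y"] z[of y] z[of "G *v y"] e by simp
  then have "(norm (G *v y))^2 = 0" by (simp add: Re_cinner_self)
  then show "G *v y = 0" by simp
qed

lemma kernel_subspace: "subspace {x::complex^'n. (M::complex^'n^'n) *v x = 0}"
  unfolding subspace_def
  by (simp add: mv_add scaleR_vec_s mv_scale)

lemma psd_trace_nonneg_aux:
  fixes A :: "complex^'n^'n"
  assumes A: "\<And>x. 0 \<le> Re (cinner x (A *v x))"
  shows "\<forall>G::complex^'n^'n. DIM(complex^'n) - dim {x. G *v x = 0} = k \<longrightarrow> hermitian G \<longrightarrow>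
           (\<forall>x. 0 \<le> Re (cinner x (G *v x))) \<longrightarrow> 0 \<le> Re (trace (G ** A))"
proof (induction k rule: less_induct)
  case (less k)
  show ?case
  proof (intro allI impI)
    fix G :: "complex^'n^'n"
    assume k: "DIM(complex^'n) - dim {x. G *v x = 0} = k" and hG: "hermitian G"
      and pG: "\<forall>x. 0 \<le> Re (cinner x (G *v x))"
    obtain \<psi> e where c\<psi>: "cinner \<psi> \<psi> = 1" and eig0: "(- G) *v \<psi> = complex_of_real e *s \<psi>"
      and ineq0: "\<And>x. e * Re (cinner x x) \<le> Re (cinner x ((- G) *v x))"
      using rayleigh_min[OF hermitian_neg[OF hG]] by blast
    define l where "l = - e"
    have eig: "G *v \<psi> = complex_of_real l *s \<psi>"
    proof -
      have "- (G *v \<psi>) = complex_of_real e *s \<psi>" using eig0 by (simp add: mv_mneg)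
      then have "G *v \<psi> = - (complex_of_real e *s \<psi>)" by (metis minus_minus)
      then show ?thesis by (simp add: l_def vec_eq_iff)
    qed
    have ineq: "Re (cinner x (G *v x)) \<le> l * Re (cinner x x)" for x
      using ineq0[of x] by (simp add: mv_mneg l_def cinner_def sum_negf)
    show "0 \<le> Re (trace (G ** A))"
    proof (cases "l \<le> 0")
      case True
      have "Re (cinner x (G *v x)) = 0" for x
        using ineq[of x] pG True Re_cinner_self[of x]
        by (smt (verit) mult_nonpos_nonneg zero_le_power2)
      then have "G = 0" by (intro herm_zero_form[OF hG])
      then show ?thesis by (simp add: trace_def)
    next
      case False
      then have lpos: "l > 0" by simp
      define G' where "G' = G - l *\<^sub>R proj \<psi>"
      have hG': "hermitian G'" unfolding G'_def
        by (intro hermitian_diff hG hermitian_scaleR hermitian_proj)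
      have G'x: "G' *v x = G *v x - (complex_of_real l * cinner \<psi> x) *s \<psi>" for x
        unfolding G'_def by (simp add: mv_mdiff mv_mscaleR proj_mv vec_eq_iff)
      have orth: "cinner \<psi> (G *v y) = complex_of_real l * cinner \<psi> y" for y
        by (simp add: hermitian_adj[OF hG] eig cinner_scale_left)
      have pG': "\<forall>x. 0 \<le> Re (cinner x (G' *v x))"
      proof
        fix x
        define \<alpha> where "\<alpha> = cinner \<psi> x"
        define y where "y = x - \<alpha> *s \<psi>"
        have y0: "cinner \<psi> y = 0" by (simp add: y_def cinner_diff_right cinner_scale_right c\<psi> \<alpha>_def)
        have "G' *v x = G *v y"
          by (simp add: G'x y_def mv_diff mv_scale eig \<alpha>_def vec_eq_iff algebra_simps)
        moreover have "cinner x (G *v y) = cinner y (G *v y)"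
        proof -
          have "x = y + \<alpha> *s \<psi>" by (simp add: y_def)
          then have "cinner x (G *v y) = cinner y (G *v y) + cnj \<alpha> * cinner \<psi> (G *v y)"
            by (metis cinner_add_left cinner_scale_left)
          then show ?thesis by (simp add: orth y0)
        qed
        ultimately show "0 \<le> Re (cinner x (G' *v x))" using pG by simp
      qed
      have ker_sub: "{x. G *v x = 0} \<subseteq> {x. G' *v x = 0}"
      proof
        fix x assume "x \<in> {x. G *v x = 0}"
        then have Gx: "G *v x = 0" by simp
        have "complex_of_real l * cinner \<psi> x = 0" using orth[of x] Gx by simp
        then have "cinner \<psi> x = 0" using lpos by simp
        then show "x \<in> {x. G' *v x = 0}" by (simp add: G'x Gx)
      qed
      have \<psi>ker: "\<psi> \<in> {x. G' *v x = 0}" by (simp add: G'x eig c\<psi>)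
      have \<psi>nker: "\<psi> \<notin> {x. G *v x = 0}"
      proof
        assume "\<psi> \<in> {x. G *v x = 0}"
        then have "complex_of_real l *s \<psi> = 0" using eig by simp
        then have "cinner \<psi> (complex_of_real l *s \<psi>) = 0" by (simp only: cinner_zero_right)
        then show False using c\<psi> lpos by (simp add: cinner_scale_right)
      qed
      have "span {x. G *v x = 0} \<subset> span {x. G' *v x = 0}"
        using ker_sub \<psi>ker \<psi>nker by (simp add: span_eq_iff[THEN iffD2, OF kernel_subspace]) blast
      then have dlt: "dim {x. G *v x = 0} < dim {x. G' *v x = 0}" by (rule dim_psubset)
      have dle: "dim {x. G' *v x = 0} \<le> DIM(complex^'n)" by (rule dim_subset_UNIV)
      have "DIM(complex^'n) - dim {x. G' *v x = 0} < k" using k dlt dle by linarith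
      then have IH: "0 \<le> Re (trace (G' ** A))"
        using less.IH hG' pG' by blast
      have "G = G' + l *\<^sub>R proj \<psi>" by (simp add: G'_def)
      then have "trace (G ** A) = trace (G' ** A) + complex_of_real l * cinner \<psi> (A *v \<psi>)"
        by (simp add: trace_madd trace_mscaleR trace_proj_mult)
      then have "Re (trace (G ** A)) = Re (trace (G' ** A)) + l * Re (cinner \<psi> (A *v \<psi>))"
        by simp
      then show ?thesis using IH A[of \<psi>] lpos by simp
    qed
  qed
qed

lemma psd_trace_nonneg:
  fixes A G :: "complex^'n^'n"
  assumes "\<And>x. 0 \<le> Re (cinner x (A *v x))" "hermitian G" "\<And>x. 0 \<le> Re (cinner x (G *v x))"
  shows "0 \<le> Re (trace (G ** A))"
  using psd_trace_nonneg_aux[OF assms(1)] assms(2,3) by blast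



lemma density_trace_ge:
  fixes H G :: "complex^'n^'n"
  assumes hH: "hermitian H" and G: "G \<in> density_ops"
    and ray: "\<And>x. e * Re (cinner x x) \<le> Re (cinner x (H *v x))"
  shows "e \<le> Re (trace (G ** H))"
proof -
  define A where "A = H - e *\<^sub>R mat 1"
  have Ax: "A *v x = H *v x - complex_of_real e *s x" for x
    unfolding A_def by (simp add: mv_mdiff mv_mscaleR)
  have pA: "0 \<le> Re (cinner x (A *v x))" for x
    using ray[of x] by (simp add: Ax cinner_diff_right cinner_scale_right)
  have hG: "hermitian G" and pG: "\<And>x. 0 \<le> Re (cinner x (G *v x))" and tG: "trace G = 1"
    using G by (auto simp: density_ops_def)
  have "0 \<le> Re (trace (G ** A))" by (rule psd_trace_nonneg[OF pA hG pG])
  also have "trace (G ** A) = trace (G ** H) - complex_of_real e * trace G"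
    unfolding A_def by (simp add: trace_mdiff_r trace_mscaleR_r)
  finally show ?thesis using tG by simp
qed

lemma cinner_pos: "\<phi> \<noteq> 0 \<Longrightarrow> 0 < Re (cinner \<phi> \<phi>)"
  by (simp add: Re_cinner_self)

lemma ground_exists:
  fixes H :: "complex^'n^'n"
  assumes hH: "hermitian H"
  shows "ground_states H \<noteq> {}"
proof -
  obtain \<psi> e where c: "cinner \<psi> \<psi> = 1" and eig: "H *v \<psi> = complex_of_real e *s \<psi>"
    and ray: "\<And>x. e * Re (cinner x x) \<le> Re (cinner x (H *v x))"
    using rayleigh_min[OF hH] by blast
  have "e \<le> \<mu>" if "\<phi> \<noteq> 0" "H *v \<phi> = complex_of_real \<mu> *s \<phi>" for \<mu> \<phi>
  proof -
    have "e * Re (cinner \<phi> \<phi>) \<le> \<mu> * Re (cinner \<phi> \<phi>)"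
      using ray[of \<phi>] that(2) by (simp add: cinner_scale_right)
    then show ?thesis using cinner_pos[OF that(1)] by simp
  qed
  then have "proj \<psi> \<in> ground_states H"
    unfolding ground_states_def using c eig by blast
  then show ?thesis by blast
qed

lemma variational:
  fixes H G0 G :: "complex^'n^'n"
  assumes hH: "hermitian H" and G0: "G0 \<in> ground_states H" and G: "G \<in> density_ops"
  shows "Re (trace (G0 ** H)) \<le> Re (trace (G ** H))"
proof -
  obtain \<psi>0 e0 where G0d: "G0 = proj \<psi>0" and c0: "cinner \<psi>0 \<psi>0 = 1"
    and eig0: "H *v \<psi>0 = complex_of_real e0 *s \<psi>0"
    and low: "\<And>\<mu> \<phi>. \<phi> \<noteq> 0 \<and> H *v \<phi> = complex_of_real \<mu> *s \<phi> \<longrightarrow> e0 \<le> \<mu>"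
    using G0 unfolding ground_states_def by blast
  obtain \<psi> e where c: "cinner \<psi> \<psi> = 1" and eig: "H *v \<psi> = complex_of_real e *s \<psi>"
    and ray: "\<And>x. e * Re (cinner x x) \<le> Re (cinner x (H *v x))"
    using rayleigh_min[OF hH] by blast
  have "\<psi> \<noteq> 0" using c by auto
  then have "e0 \<le> e" using low eig by blast
  moreover have "Re (trace (G0 ** H)) = e0"
    by (simp add: G0d trace_proj_mult eig0 cinner_scale_right c0)
  moreover have "e \<le> Re (trace (G ** H))" by (rule density_trace_ge[OF hH G ray])
  ultimately show ?thesis by simp
qed

lemma pure_density: "pure_states \<subseteq> density_ops"
proof
  fix G :: "complex^'n^'n" assume "G \<in> pure_states"
  then obtain \<psi> where G: "G = proj \<psi>" and c: "cinner \<psi> \<psi> = 1"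
    unfolding pure_states_def by blast
  have "Re (cinner x (proj \<psi> *v x)) = (cmod (cinner \<psi> x))^2" for x
  proof -
    have "cinner x (proj \<psi> *v x) = cinner \<psi> x * cnj (cinner \<psi> x)"
      by (simp add: proj_mv cinner_scale_right cinner_cnj[of x \<psi>] mult.commute)
    then show ?thesis by (simp add: complex_norm_square[symmetric])
  qed
  moreover have "trace (proj \<psi>) = 1"
  proof -
    have "trace (proj \<psi>) = cnj (cinner \<psi> \<psi>)"
      by (simp add: trace_def proj_def cinner_def cnj_sum mult.commute)
    then show ?thesis using c by simp
  qed
  ultimately show "G \<in> density_ops"
    unfolding density_ops_def G by (simp add: hermitian_proj)
qed

lemma ground_pure: "ground_states H \<subseteq> pure_states"
  unfolding ground_states_def pure_states_def by blast

lemma density_nonempty: "density_ops \<noteq> ({} :: (complex^'n^'n) set)"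
proof -
  fix i :: 'n
  have "cinner (axis i 1 :: complex^'n) (axis i 1) = 1"
    by (simp add: cinner_def axis_def if_distrib cong: if_cong)
  then have "proj (axis i 1 :: complex^'n) \<in> pure_states" unfolding pure_states_def by blast
  then show ?thesis using pure_density by blast
qed



lemma norm_vec_le_sum: "norm (x::'a::real_normed_vector^'m) \<le> (\<Sum>i\<in>UNIV. norm (x$i))"
  unfolding norm_vec_def by (rule L2_set_le_sum) simp

lemma cinner_axis: "cinner (axis i 1) (y::complex^'n) = y$i"
proof -
  have "(\<Sum>k\<in>UNIV. cnj ((axis i 1::complex^'n)$k) * y$k) = (\<Sum>k\<in>UNIV. if k = i then y$i else 0)"
    by (rule sum.cong) (auto simp: axis_def)
  then show ?thesis by (simp add: cinner_def)
qed

lemma mv_axis: "((M::complex^'n^'n) *v axis j 1) $ i = M$i$j"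
proof -
  have "(\<Sum>k\<in>UNIV. M$i$k * (axis j 1::complex^'n)$k) = (\<Sum>k\<in>UNIV. if k = j then M$i$j else 0)"
    by (rule sum.cong) (auto simp: axis_def)
  then show ?thesis by (simp add: matrix_vector_mult_def)
qed

lemma cinner_axis_mv: "cinner (axis i 1) ((M::complex^'n^'n) *v axis j 1) = M$i$j"
  by (simp add: cinner_axis mv_axis)

lemma density_entry_bound:
  fixes G :: "complex^'n^'n"
  assumes G: "G \<in> density_ops"
  shows "cmod (G$i$j) \<le> 2"
proof -
  have hG: "hermitian G" and pG: "\<And>x. 0 \<le> Re (cinner x (G *v x))" and tG: "trace G = 1"
    using G by (auto simp: density_ops_def)
  have diag0: "0 \<le> Re (G$k$k)" for k using pG[of "axis k 1"] by (simp add: cinner_axis_mv)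
  have diag1: "Re (G$k$k) \<le> 1" for k
  proof -
    have "Re (trace G) = (\<Sum>k\<in>UNIV. Re (G$k$k))" by (simp add: trace_def)
    also have "(\<Sum>k\<in>UNIV. Re (G$k$k)) \<ge> Re (G$k$k)"
      by (rule member_le_sum) (simp_all add: diag0)
    finally show ?thesis using tG by simp
  qed
  have gen: "0 \<le> Re (G$i$i) + Re (G$j$j) + 2 * Re (z * G$i$j)" if z: "cmod z = 1" for z
  proof -
    define a where "a = (axis i 1 :: complex^'n)"
    define b where "b = (axis j 1 :: complex^'n)"
    have "cinner (a + z *s b) (G *v (a + z *s b)) =
          cinner a (G *v a) + z * cinner a (G *v b) + cnj z * cinner b (G *v a) + cnj z * z * cinner b (G *v b)"
      by (simp add: mv_add mv_scale cinner_add_left cinner_add_right cinner_scale_left cinner_scale_right algebra_simps)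
    also have "\<dots> = G$i$i + z * G$i$j + cnj z * G$j$i + cnj z * z * G$j$j"
      by (simp add: a_def b_def cinner_axis_mv)
    finally have eq: "cinner (a + z *s b) (G *v (a + z *s b)) = G$i$i + z * G$i$j + cnj z * G$j$i + cnj z * z * G$j$j" .
    have zz: "cnj z * z = 1"
      by (metis complex_norm_square mult.commute of_real_1 power_one z)
    have ji: "G$j$i = cnj (G$i$j)" by (simp add: hermitian_cnj[OF hG])
    have "Re (cnj z * cnj (G$i$j)) = Re (z * G$i$j)"
      by simp
    then show ?thesis using pG[of "a + z *s b"] unfolding eq zz ji by simp
  qed
  have r1: "- 1 \<le> Re (G$i$j)" using gen[of 1] diag1[of i] diag1[of j] by simp
  have r2: "Re (G$i$j) \<le> 1" using gen[of "-1"] diag1[of i] diag1[of j] by simp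
  have r3: "Im (G$i$j) \<le> 1" using gen[of "\<i>"] diag1[of i] diag1[of j] by simp
  have r4: "- 1 \<le> Im (G$i$j)" using gen[of "-\<i>"] diag1[of i] diag1[of j] by simp
  have "cmod (G$i$j) \<le> \<bar>Re (G$i$j)\<bar> + \<bar>Im (G$i$j)\<bar>" by (rule cmod_le)
  then show ?thesis using r1 r2 r3 r4 by linarith
qed

lemma density_bounded: "bounded (density_ops :: (complex^'n^'n) set)"
proof -
  have "norm G \<le> (\<Sum>i\<in>(UNIV::'n set). \<Sum>j\<in>(UNIV::'n set). 2)" if "G \<in> density_ops" for G :: "complex^'n^'n"
  proof -
    have "norm G \<le> (\<Sum>i\<in>UNIV. norm (G$i))" by (rule norm_vec_le_sum)
    also have "\<dots> \<le> (\<Sum>i\<in>UNIV. \<Sum>j\<in>UNIV. norm (G$i$j))"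
      by (rule sum_mono) (rule norm_vec_le_sum)
    also have "\<dots> \<le> (\<Sum>i\<in>(UNIV::'n set). \<Sum>j\<in>(UNIV::'n set). 2)"
      by (intro sum_mono) (simp add: density_entry_bound[OF that])
    finally show ?thesis .
  qed
  then show ?thesis unfolding bounded_iff by blast
qed

lemma density_closed: "closed (density_ops :: (complex^'n^'n) set)"
proof -
  have eq: "density_ops = {G::complex^'n^'n. \<forall>i j. G$i$j = cnj (G$j$i)} \<inter>
      (\<Inter>x. {G. 0 \<le> Re (cinner x (G *v x))}) \<inter> {G. trace G = 1}"
    unfolding density_ops_def hermitian_def by auto
  have c1: "closed {G::complex^'n^'n. \<forall>i j. G$i$j = cnj (G$j$i)}"
    by (intro closed_Collect_all closed_Collect_eq continuous_intros)
  have c2: "closed {G::complex^'n^'n. 0 \<le> Re (cinner x (G *v x))}" for x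
    unfolding cinner_def matrix_vector_mult_def
    by (intro closed_Collect_le continuous_intros)
  have c3: "closed {G::complex^'n^'n. trace G = 1}"
    unfolding trace_def by (intro closed_Collect_eq continuous_intros)
  show ?thesis unfolding eq by (intro closed_Int closed_INT ballI c1 c2 c3)
qed

lemma density_compact: "compact (density_ops :: (complex^'n^'n) set)"
  by (simp add: compact_eq_bounded_closed density_bounded density_closed)

lemma trace_scaleR: "trace ((c::real) *\<^sub>R (M::complex^'n^'n)) = complex_of_real c * trace M"
  by (simp add: trace_def) (simp add: sum_distrib_left scaleR_conv_of_real)

lemma density_convex: "convex (density_ops :: (complex^'n^'n) set)"
  unfolding convex_def
proof (intro ballI allI impI)
  fix x y :: "complex^'n^'n" and u v :: real
  assume x: "x \<in> density_ops" and y: "y \<in> density_ops" and uv: "0 \<le> u" "0 \<le> v" "u + v = 1"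
  have hx: "hermitian x" and px: "\<And>z. 0 \<le> Re (cinner z (x *v z))" and tx: "trace x = 1"
    using x by (auto simp: density_ops_def)
  have hy: "hermitian y" and py: "\<And>z. 0 \<le> Re (cinner z (y *v z))" and ty: "trace y = 1"
    using y by (auto simp: density_ops_def)
  have "hermitian (u *\<^sub>R x + v *\<^sub>R y)" by (intro hermitian_add hermitian_scaleR hx hy)
  moreover have "0 \<le> Re (cinner z ((u *\<^sub>R x + v *\<^sub>R y) *v z))" for z
  proof -
    have "Re (cinner z ((u *\<^sub>R x + v *\<^sub>R y) *v z)) = u * Re (cinner z (x *v z)) + v * Re (cinner z (y *v z))"
      by (simp add: mv_madd mv_mscaleR cinner_add_right cinner_scale_right)
    then show ?thesis using px[of z] py[of z] uv by simp
  qed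
  moreover have "trace (u *\<^sub>R x + v *\<^sub>R y) = 1"
    using tx ty uv by (simp add: trace_add trace_scaleR flip: of_real_add)
  ultimately show "u *\<^sub>R x + v *\<^sub>R y \<in> density_ops" by (simp add: density_ops_def)
qed



lemma linear_repr:
  fixes f :: "'v::euclidean_space \<Rightarrow> real"
  assumes lf: "linear f"
  shows "f v = (\<Sum>b\<in>Basis. f b *\<^sub>R b) \<bullet> v"
proof -
  have "f v = f (\<Sum>b\<in>Basis. (v \<bullet> b) *\<^sub>R b)" by (simp add: euclidean_representation)
  also have "\<dots> = (\<Sum>b\<in>Basis. (v \<bullet> b) * f b)"
    by (simp add: linear_sum[OF lf] linear_scale[OF lf])
  also have "\<dots> = (\<Sum>b\<in>Basis. f b *\<^sub>R b) \<bullet> v"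
    by (simp add: inner_sum_left inner_commute[of v] mult.commute)
  finally show ?thesis .
qed

lemma iota_star_linear:
  assumes gft: "gen_functional_theory \<iota> W"
  shows "linear (iota_star \<iota> \<Gamma>)"
proof -
  have li: "linear \<iota>" using gft by (simp add: gen_functional_theory_def)
  show ?thesis
    by (rule linearI)
       (simp_all add: iota_star_def linear_add[OF li] linear_scale[OF li] trace_madd_r trace_mscaleR_r)
qed

lemma iota_star_add: "iota_star \<iota> (G1 + G2) v = iota_star \<iota> G1 v + iota_star \<iota> G2 v"
  by (simp add: iota_star_def trace_madd)
lemma iota_star_scale: "iota_star \<iota> ((c::real) *\<^sub>R G) v = c * iota_star \<iota> G v"
  by (simp add: iota_star_def trace_mscaleR)
lemma energy_add: "energy W (G1 + G2) = energy W G1 + energy W G2"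
  by (simp add: energy_def trace_madd)
lemma energy_scale: "energy W ((c::real) *\<^sub>R G) = c * energy W G"
  by (simp add: energy_def trace_mscaleR)

lemma GL1:
  fixes a2 p q c e :: real
  assumes "a2 > 0" "p + a2 * c < q + a2 * e"
  shows "- (q / a2) - e \<le> - (p / a2) - c"
proof -
  have "p - q < (e - c) * a2" using assms by (simp add: algebra_simps)
  then have "(p - q) / a2 < e - c" using assms(1) by (simp add: pos_divide_less_eq)
  moreover have "(p - q) / a2 = p / a2 - q / a2" by (simp add: diff_divide_distrib)
  ultimately show ?thesis by linarith
qed

lemma GL2:
  fixes l d p q c e Lb :: real
  assumes "l \<ge> 0" "l * d \<ge> c - Lb" "q - p \<ge> d" "e \<ge> Lb"
  shows "- (l * q) - e \<le> - (l * p) - c"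
proof -
  have "l * (q - p) \<ge> l * d" using assms(1,3) by (rule mult_left_mono[rotated])
  then show ?thesis using assms by (simp add: algebra_simps)
qed

lemma separation:
  fixes \<iota> :: "'v::euclidean_space \<Rightarrow> complex^'n^'n" and W :: "complex^'n^'n"
  assumes gft: "gen_functional_theory \<iota> W" and lr: "linear \<rho>" and cF: "ereal c < F_e \<iota> W \<rho>"
  shows "\<exists>v. \<forall>\<Gamma>\<in>density_ops. iota_star \<iota> \<Gamma> v - energy W \<Gamma> \<le> \<rho> v - c"
proof -
  have hW: "hermitian W" using gft by (simp add: gen_functional_theory_def)
  define Rv where "Rv \<Gamma> = (\<Sum>b\<in>(Basis::'v set). iota_star \<iota> \<Gamma> b *\<^sub>R b)" for \<Gamma>
  have Rv_inner: "iota_star \<iota> \<Gamma> v = Rv \<Gamma> \<bullet> v" for \<Gamma> v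
    unfolding Rv_def by (rule linear_repr[OF iota_star_linear[OF gft]])
  define r where "r = (\<Sum>b\<in>(Basis::'v set). \<rho> b *\<^sub>R b)"
  have r_inner: "\<rho> v = r \<bullet> v" for v unfolding r_def by (rule linear_repr[OF lr])
  define L where "L \<Gamma> = (Rv \<Gamma>, energy W \<Gamma>)" for \<Gamma>
  have linL: "linear L"
    by (rule linearI)
       (simp_all add: L_def Rv_def iota_star_add iota_star_scale energy_add energy_scale
          sum.distrib scaleR_add_left scaleR_sum_right)
  define K where "K = L ` density_ops"
  have Kc: "compact K" unfolding K_def
    by (intro compact_continuous_image density_compact linear_continuous_on)
       (simp add: linL flip: linear_conv_bounded_linear)
  have Kv: "convex K" unfolding K_def by (intro convex_linear_image linL density_convex)
  define T :: "('v \<times> real) set" where "T = {0} \<times> {0..}"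
  have Tc: "closed T" unfolding T_def by (intro closed_Times closed_atLeast) simp
  have Tv: "convex T" unfolding T_def by (intro convex_Times) simp_all
  define K' where "K' = (\<Union>x\<in>T. \<Union>y\<in>K. {x + y})"
  have K'c: "closed K'" unfolding K'_def by (rule closed_compact_sums[OF Tc Kc])
  have K'v: "convex K'" unfolding K'_def by (rule convex_sums[OF Tv Kv])
  have memK': "(Rv \<Gamma>, s + energy W \<Gamma>) \<in> K'" if "\<Gamma> \<in> density_ops" "s \<ge> 0" for \<Gamma> s
  proof -
    have "(0, s) \<in> T" using that by (simp add: T_def)
    moreover have "L \<Gamma> \<in> K" using that by (simp add: K_def)
    moreover have "(Rv \<Gamma>, s + energy W \<Gamma>) = (0, s) + L \<Gamma>" by (simp add: L_def)
    ultimately show ?thesis unfolding K'_def by blast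
  qed
  have notin: "(r, c) \<notin> K'"
  proof
    assume "(r, c) \<in> K'"
    then obtain x y where x: "x \<in> T" and y: "y \<in> K" and xy: "(r, c) = x + y"
      unfolding K'_def by blast
    obtain s where xs: "x = (0, s)" and s: "s \<ge> 0" using x by (auto simp: T_def)
    obtain \<Gamma> where \<Gamma>: "\<Gamma> \<in> density_ops" and yL: "y = L \<Gamma>" using y by (auto simp: K_def)
    have rR: "r = Rv \<Gamma>" and ce: "c = s + energy W \<Gamma>" using xy xs yL by (auto simp: L_def)
    have "iota_star \<iota> \<Gamma> = \<rho>" by (rule ext) (simp add: Rv_inner r_inner rR)
    then have "F_e \<iota> W \<rho> \<le> ereal (energy W \<Gamma>)"
      unfolding F_e_def using \<Gamma> by (intro INF_lower) auto
    also have "\<dots> \<le> ereal c" using ce s by simp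
    finally show False using cF by simp
  qed
  obtain a \<beta> where a1: "a \<bullet> (r, c) < \<beta>" and a2: "\<And>x. x \<in> K' \<Longrightarrow> \<beta> < a \<bullet> x"
    using separating_hyperplane_closed_point[OF K'v K'c notin] by blast
  obtain a1 a2 where aa: "a = (a1, a2)" by (cases a)
  have sepr: "a1 \<bullet> r + a2 * c < \<beta>" using a1 aa by simp
  have sepK: "\<beta> < a1 \<bullet> Rv \<Gamma> + a2 * (s + energy W \<Gamma>)" if "\<Gamma> \<in> density_ops" "s \<ge> 0" for \<Gamma> s
    using a2[OF memK'[OF that]] aa by simp
  obtain \<Gamma>0 where \<Gamma>0: "\<Gamma>0 \<in> ground_states W" using ground_exists[OF hW] by blast
  define Lb where "Lb = Re (trace (\<Gamma>0 ** W))"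
  have Lb: "Lb \<le> energy W \<Gamma>" if "\<Gamma> \<in> density_ops" for \<Gamma>
    unfolding Lb_def energy_def by (rule variational[OF hW \<Gamma>0 that])
  obtain \<Gamma>e :: "complex^'n^'n" where \<Gamma>e: "\<Gamma>e \<in> density_ops" using density_nonempty by blast
  have a2nn: "a2 \<ge> 0"
  proof (rule ccontr)
    assume "\<not> a2 \<ge> 0"
    then have neg: "a2 < 0" by simp
    define s where "s = (\<bar>a1 \<bullet> Rv \<Gamma>e\<bar> + \<bar>a2 * energy W \<Gamma>e\<bar> + \<bar>\<beta>\<bar>) / (- a2)"
    have s0: "s \<ge> 0" unfolding s_def using neg by (intro divide_nonneg_pos) auto
    have as: "a2 * s = - (\<bar>a1 \<bullet> Rv \<Gamma>e\<bar> + \<bar>a2 * energy W \<Gamma>e\<bar> + \<bar>\<beta>\<bar>)"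
      unfolding s_def using neg by (simp add: field_simps)
    have "\<beta> < a1 \<bullet> Rv \<Gamma>e + a2 * (s + energy W \<Gamma>e)" by (rule sepK[OF \<Gamma>e s0])
    also have "\<dots> = a1 \<bullet> Rv \<Gamma>e + a2 * energy W \<Gamma>e + a2 * s" by (simp add: algebra_simps)
    finally show False using as by linarith
  qed
  show ?thesis
  proof (cases "a2 > 0")
    case True
    define v where "v = - (1 / a2) *\<^sub>R a1"
    have "iota_star \<iota> \<Gamma> v - energy W \<Gamma> \<le> \<rho> v - c" if \<Gamma>: "\<Gamma> \<in> density_ops" for \<Gamma>
    proof -
      have "a1 \<bullet> r + a2 * c < a1 \<bullet> Rv \<Gamma> + a2 * energy W \<Gamma>"
        using sepr sepK[OF \<Gamma>, of 0] by simp
      then have "- ((a1 \<bullet> Rv \<Gamma>) / a2) - energy W \<Gamma> \<le> - ((a1 \<bullet> r) / a2) - c"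
        by (rule GL1[OF True])
      then show ?thesis
        by (simp add: Rv_inner r_inner v_def inner_commute)
    qed
    then show ?thesis by blast
  next
    case False
    then have z: "a2 = 0" using a2nn by simp
    define d where "d = \<beta> - a1 \<bullet> r"
    have dpos: "d > 0" using sepr z by (simp add: d_def)
    define l where "l = max 0 ((c - Lb) / d)"
    have l0: "l \<ge> 0" by (simp add: l_def)
    have ld: "l * d \<ge> c - Lb"
    proof -
      have "(c - Lb) / d \<le> l" by (simp add: l_def)
      then have "(c - Lb) / d * d \<le> l * d" using dpos by (intro mult_right_mono) auto
      then show ?thesis using dpos by simp
    qed
    define v where "v = - l *\<^sub>R a1"
    have "iota_star \<iota> \<Gamma> v - energy W \<Gamma> \<le> \<rho> v - c" if \<Gamma>: "\<Gamma> \<in> density_ops" for \<Gamma>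
    proof -
      have "a1 \<bullet> Rv \<Gamma> - a1 \<bullet> r \<ge> d"
        using sepK[OF \<Gamma>, of 0] z by (simp add: d_def)
      then have "- (l * (a1 \<bullet> Rv \<Gamma>)) - energy W \<Gamma> \<le> - (l * (a1 \<bullet> r)) - c"
        by (rule GL2[OF l0 ld _ Lb[OF \<Gamma>]])
      then show ?thesis
        by (simp add: Rv_inner r_inner v_def inner_commute)
    qed
    then show ?thesis by blast
  qed
qed



lemma ereal_aux1: "ereal x - G \<le> C \<Longrightarrow> ereal x - C \<le> G"
  by (cases G; cases C) auto

lemma ereal_aux2: "ereal (a + m) \<le> F \<Longrightarrow> ereal a - F \<le> ereal (- m)"
  by (cases F) auto

lemma ereal_aux3: "C \<le> ereal (a - c) \<Longrightarrow> ereal c \<le> ereal a - C"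
  by (cases C) auto

lemma biconj_le:
  assumes "linear \<rho>"
  shows "biconj g \<rho> \<le> g \<rho>"
  unfolding biconj_def
proof (rule SUP_least)
  fix v
  have "ereal (\<rho> v) - g \<rho> \<le> conj_fn g v"
    unfolding conj_fn_def using assms by (intro SUP_upper) auto
  then show "ereal (\<rho> v) - conj_fn g v \<le> g \<rho>" by (rule ereal_aux1)
qed

lemma conj_antimono:
  assumes "\<And>\<rho>. g1 \<rho> \<le> g2 \<rho>"
  shows "conj_fn g2 v \<le> conj_fn g1 v"
  unfolding conj_fn_def
  by (intro SUP_mono') (simp add: assms ereal_minus_mono)

lemma biconj_antimono:
  assumes "\<And>v. conj_fn g1 v \<le> conj_fn g2 v"
  shows "biconj g2 \<rho> \<le> biconj g1 \<rho>"
  unfolding biconj_def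
  by (intro SUP_mono') (simp add: assms ereal_minus_mono)

lemma Fe_le_Fp: "F_e \<iota> W \<rho> \<le> F_p \<iota> W \<rho>"
  unfolding F_e_def F_p_def
  by (rule INF_superset_mono) (use pure_density in auto)

lemma Fp_le_FHK: "F_p \<iota> W \<rho> \<le> F_HK \<iota> W \<rho>"
proof (cases "\<exists>v \<Gamma>. \<Gamma> \<in> Gp \<iota> W v \<and> iota_star \<iota> \<Gamma> = \<rho>")
  case True
  define p where "p = (SOME (v, \<Gamma>). \<Gamma> \<in> Gp \<iota> W v \<and> iota_star \<iota> \<Gamma> = \<rho>)"
  have "\<exists>q. (\<lambda>(v, \<Gamma>). \<Gamma> \<in> Gp \<iota> W v \<and> iota_star \<iota> \<Gamma> = \<rho>) q" using True by auto
  then have "(\<lambda>(v, \<Gamma>). \<Gamma> \<in> Gp \<iota> W v \<and> iota_star \<iota> \<Gamma> = \<rho>) p"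
    unfolding p_def by (rule someI_ex)
  then have p1: "snd p \<in> Gp \<iota> W (fst p)" and p2: "iota_star \<iota> (snd p) = \<rho>"
    by (auto simp: case_prod_beta)
  have "snd p \<in> pure_states" using p1 ground_pure unfolding Gp_def by blast
  then have "F_p \<iota> W \<rho> \<le> ereal (energy W (snd p))"
    unfolding F_p_def using p2 by (intro INF_lower) auto
  then show ?thesis using True by (simp add: F_HK_def p_def)
next
  case False
  have "F_HK \<iota> W \<rho> = \<infinity>" unfolding F_HK_def by (rule if_not_P[OF False])
  then show ?thesis by simp
qed

lemma conj_Fe_bound:
  fixes \<iota> :: "'v::euclidean_space \<Rightarrow> complex^'n^'n" and W :: "complex^'n^'n" and v :: 'v
  assumes "\<And>\<Gamma>. \<Gamma> \<in> density_ops \<Longrightarrow> iota_star \<iota> \<Gamma> v - energy W \<Gamma> \<le> m"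
  shows "conj_fn (F_e \<iota> W) v \<le> ereal m"
  unfolding conj_fn_def
proof (rule SUP_least)
  fix \<rho> :: "'v \<Rightarrow> real" assume "\<rho> \<in> {\<rho>. linear \<rho>}"
  have "ereal (\<rho> v + (- m)) \<le> F_e \<iota> W \<rho>"
    unfolding F_e_def
  proof (rule INF_greatest)
    fix \<Gamma> assume "\<Gamma> \<in> {\<Gamma> \<in> density_ops. iota_star \<iota> \<Gamma> = \<rho>}"
    then show "ereal (\<rho> v + - m) \<le> ereal (energy W \<Gamma>)" using assms[of \<Gamma>] by auto
  qed
  then show "ereal (\<rho> v) - F_e \<iota> W \<rho> \<le> ereal m"
    using ereal_aux2 by fastforce
qed

lemma trace_split:
  assumes gft: "gen_functional_theory \<iota> W"
  shows "Re (trace (\<Gamma> ** (\<iota> u + W))) = iota_star \<iota> \<Gamma> u + energy W \<Gamma>"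
  by (simp add: trace_madd_r iota_star_def energy_def)

lemma conj_Fe_le_FHK:
  fixes \<iota> :: "'v::euclidean_space \<Rightarrow> complex^'n^'n" and W :: "complex^'n^'n"
  assumes gft: "gen_functional_theory \<iota> W"
  shows "conj_fn (F_e \<iota> W) v \<le> conj_fn (F_HK \<iota> W) v"
proof -
  have li: "linear \<iota>" and hi: "\<And>u. hermitian (\<iota> u)" and hW: "hermitian W"
    using gft by (auto simp: gen_functional_theory_def)
  define H where "H = \<iota> (- v) + W"
  have hH: "hermitian H" unfolding H_def by (intro hermitian_add hi hW)
  obtain \<Gamma>0 where \<Gamma>0: "\<Gamma>0 \<in> ground_states H" using ground_exists[OF hH] by blast
  have \<Gamma>0d: "\<Gamma>0 \<in> density_ops" using \<Gamma>0 ground_pure pure_density by blast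
  define m where "m = Re (trace (\<Gamma>0 ** H))"
  have neg: "iota_star \<iota> \<Gamma> (- v) = - iota_star \<iota> \<Gamma> v" for \<Gamma> :: "complex^'n^'n"
    by (rule linear_neg[OF iota_star_linear[OF gft]])
  have tr: "Re (trace (\<Gamma> ** H)) = energy W \<Gamma> - iota_star \<iota> \<Gamma> v" for \<Gamma> :: "complex^'n^'n"
    unfolding H_def trace_split[OF gft] neg by simp
  have "conj_fn (F_e \<iota> W) v \<le> ereal (- m)"
  proof (rule conj_Fe_bound)
    fix \<Gamma> :: "complex^'n^'n" assume "\<Gamma> \<in> density_ops"
    then have "m \<le> Re (trace (\<Gamma> ** H))" unfolding m_def by (rule variational[OF hH \<Gamma>0])
    then show "iota_star \<iota> \<Gamma> v - energy W \<Gamma> \<le> - m" by (simp add: tr)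
  qed
  also have "ereal (- m) \<le> conj_fn (F_HK \<iota> W) v"
  proof -
    define \<rho>0 where "\<rho>0 = iota_star \<iota> \<Gamma>0"
    have l0: "linear \<rho>0" unfolding \<rho>0_def by (rule iota_star_linear[OF gft])
    have ex: "\<exists>u \<Gamma>. \<Gamma> \<in> Gp \<iota> W u \<and> iota_star \<iota> \<Gamma> = \<rho>0"
      using \<Gamma>0 unfolding Gp_def H_def \<rho>0_def by blast
    define p where "p = (SOME (u, \<Gamma>). \<Gamma> \<in> Gp \<iota> W u \<and> iota_star \<iota> \<Gamma> = \<rho>0)"
    have "\<exists>q. (\<lambda>(u, \<Gamma>). \<Gamma> \<in> Gp \<iota> W u \<and> iota_star \<iota> \<Gamma> = \<rho>0) q" using ex by auto
    then have "(\<lambda>(u, \<Gamma>). \<Gamma> \<in> Gp \<iota> W u \<and> iota_star \<iota> \<Gamma> = \<rho>0) p"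
      unfolding p_def by (rule someI_ex)
    then have p1: "snd p \<in> ground_states (\<iota> (fst p) + W)" and p2: "iota_star \<iota> (snd p) = \<rho>0"
      by (auto simp: case_prod_beta Gp_def)
    have hH': "hermitian (\<iota> (fst p) + W)" by (intro hermitian_add hi hW)
    have "Re (trace (snd p ** (\<iota> (fst p) + W))) \<le> Re (trace (\<Gamma>0 ** (\<iota> (fst p) + W)))"
      by (rule variational[OF hH' p1 \<Gamma>0d])
    then have ele: "energy W (snd p) \<le> energy W \<Gamma>0"
      unfolding trace_split[OF gft] p2 \<rho>0_def by simp
    have FHK: "F_HK \<iota> W \<rho>0 = ereal (energy W (snd p))"
      using ex by (simp add: F_HK_def p_def)
    have "ereal (- m) = ereal (\<rho>0 v) - ereal (energy W \<Gamma>0)"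
      by (simp add: m_def tr \<rho>0_def)
    also have "\<dots> \<le> ereal (\<rho>0 v) - F_HK \<iota> W \<rho>0"
      using ele FHK by (simp add: ereal_minus_mono)
    also have "\<dots> \<le> conj_fn (F_HK \<iota> W) v"
      unfolding conj_fn_def using l0 by (intro SUP_upper) auto
    finally show ?thesis .
  qed
  finally show ?thesis .
qed

lemma Fe_le_biconj:
  fixes \<iota> :: "'v::euclidean_space \<Rightarrow> complex^'n^'n" and W :: "complex^'n^'n"
  assumes gft: "gen_functional_theory \<iota> W" and lr: "linear \<rho>"
  shows "F_e \<iota> W \<rho> \<le> biconj (F_e \<iota> W) \<rho>"
proof (rule ccontr)
  assume "\<not> F_e \<iota> W \<rho> \<le> biconj (F_e \<iota> W) \<rho>"
  then have "biconj (F_e \<iota> W) \<rho> < F_e \<iota> W \<rho>" by simp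
  then obtain c where c1: "biconj (F_e \<iota> W) \<rho> < ereal c" and c2: "ereal c < F_e \<iota> W \<rho>"
    using ereal_dense2 by blast
  obtain v where v: "\<forall>\<Gamma>\<in>density_ops. iota_star \<iota> \<Gamma> v - energy W \<Gamma> \<le> \<rho> v - c"
    using separation[OF gft lr c2] by blast
  have "conj_fn (F_e \<iota> W) v \<le> ereal (\<rho> v - c)"
    by (rule conj_Fe_bound) (use v in auto)
  then have "ereal c \<le> ereal (\<rho> v) - conj_fn (F_e \<iota> W) v" by (rule ereal_aux3)
  also have "\<dots> \<le> biconj (F_e \<iota> W) \<rho>" unfolding biconj_def by (rule SUP_upper) simp
  finally show False using c1 by simp
qed

theorem proposition2p34:
  fixes \<iota> :: "'v::euclidean_space \<Rightarrow> complex^'n^'n" and W :: "complex^'n^'n"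
  assumes "gen_functional_theory \<iota> W"
  shows "\<forall>\<rho>. linear \<rho> \<longrightarrow>
           biconj (F_HK \<iota> W) \<rho> = F_e \<iota> W \<rho> \<and> biconj (F_p \<iota> W) \<rho> = F_e \<iota> W \<rho>"
proof (intro allI impI)
  fix \<rho> :: "'v \<Rightarrow> real"
  assume lr: "linear \<rho>"
  have a: "F_e \<iota> W \<rho> \<le> biconj (F_e \<iota> W) \<rho>" by (rule Fe_le_biconj[OF assms lr])
  have b: "biconj (F_e \<iota> W) \<rho> \<le> biconj (F_p \<iota> W) \<rho>"
    by (intro biconj_antimono conj_antimono Fe_le_Fp)
  have c: "biconj (F_p \<iota> W) \<rho> \<le> biconj (F_HK \<iota> W) \<rho>"
    by (intro biconj_antimono conj_antimono Fp_le_FHK)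
  have d: "biconj (F_HK \<iota> W) \<rho> \<le> biconj (F_e \<iota> W) \<rho>"
    by (intro biconj_antimono conj_Fe_le_FHK[OF assms])
  have e: "biconj (F_e \<iota> W) \<rho> \<le> F_e \<iota> W \<rho>" by (rule biconj_le[OF lr])
  show "biconj (F_HK \<iota> W) \<rho> = F_e \<iota> W \<rho> \<and> biconj (F_p \<iota> W) \<rho> = F_e \<iota> W \<rho>"
    using a b c d e by (meson order_antisym order_trans)
qed


end
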